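(* Let $N$ be a normal subgroup of $F$ and let $L_N$ be the normal closure of $N$ in $F(Y_C)$. Then $L_N\trianglelefteq F(Y_C)$ and $L_N\cap F=N$.
   Context: Let $m\ge1$ and $C\ge1$ be integers. For $i=1,\dots,m$ let $Y_{C,i}=\{a_{1,i},\dots,a_{C,i}\}$, let $Y_C=\bigcup_i Y_{C,i}$ (all $a_{j,i}$ distinct), and let $F(Y_C)$ be the free group on $Y_C$. Put $A_i=a_{1,i}a_{2,i}\cdots a_{C,i}\in F(Y_C)$, $\mathcal{D}=\{A_1,\dots,A_m\}$, and let $F$ be the subgroup of $F(Y_C)$ generated by $\mathcal{D}$ (which is free with basis $\mathcal{D}$). *)

theory Defs
  imports "HOL-Algebra.Algebra"
begin

text \<open>Free group on a set of generators Y, realised as reduced words.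
A letter is a pair (b, y): (False, y) stands for y, (True, y) for y inverse.\<close>

type_synonym 'a letter = "bool \<times> 'a"

definition cancels :: "'a letter \<Rightarrow> 'a letter \<Rightarrow> bool" where
  "cancels x y \<longleftrightarrow> snd x = snd y \<and> fst x \<noteq> fst y"

fun reduced :: "'a letter list \<Rightarrow> bool" where
  "reduced [] = True"
| "reduced [x] = True"
| "reduced (x # y # zs) = (\<not> cancels x y \<and> reduced (y # zs))"

definition reduce :: "'a letter list \<Rightarrow> 'a letter list" where
  "reduce w = foldr (\<lambda>x acc. case acc of [] \<Rightarrow> [x]
                      | y # ys \<Rightarrow> (if cancels x y then ys else x # acc)) w []"

definition free_group :: "'a set \<Rightarrow> ('a letter list) monoid" where
  "free_group Y = \<lparr> carrier = {w. snd ` set w \<subseteq> Y \<and> reduced w},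
                    monoid.mult = (\<lambda>u v. reduce (u @ v)),
                    monoid.one = [] \<rparr>"

definition normal_closure :: "('a, 'b) monoid_scheme \<Rightarrow> 'a set \<Rightarrow> 'a set" where
  "normal_closure G S =
     generate G (\<Union>g\<in>carrier G. (\<lambda>s. g \<otimes>\<^bsub>G\<^esub> s \<otimes>\<^bsub>G\<^esub> inv\<^bsub>G\<^esub> g) ` S)"

text \<open>The generators a_{j,i} are encoded as pairs (j,i), 1 \<le> j \<le> C, 1 \<le> i \<le> m.\<close>
definition Y_C :: "nat \<Rightarrow> nat \<Rightarrow> (nat \<times> nat) set" where
  "Y_C m C = {(j, i). 1 \<le> j \<and> j \<le> C \<and> 1 \<le> i \<and> i \<le> m}"

definition A_word :: "nat \<Rightarrow> nat \<Rightarrow> (nat \<times> nat) letter list" where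
  "A_word C i = map (\<lambda>j. (False, (j, i))) [1..<C+1]"

definition D_set :: "nat \<Rightarrow> nat \<Rightarrow> (nat \<times> nat) letter list set" where
  "D_set m C = A_word C ` {1..m}"

definition F_sub :: "nat \<Rightarrow> nat \<Rightarrow> (nat \<times> nat) letter list set" where
  "F_sub m C = generate (free_group (Y_C m C)) (D_set m C)"

end

theory Submission
  imports Defs
begin

definition stp :: "'a letter \<Rightarrow> 'a letter list \<Rightarrow> 'a letter list" where
  "stp x acc = (case acc of [] \<Rightarrow> [x] | y # ys \<Rightarrow> (if cancels x y then ys else x # acc))"

lemma reduce_foldr: "reduce w = foldr stp w []"
  unfolding reduce_def stp_def by simp

lemma reduce_Nil[simp]: "reduce [] = []" by (simp add: reduce_foldr)
lemma reduce_Cons: "reduce (x # w) = stp x (reduce w)" by (simp add: reduce_foldr)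

lemma cancels_sym: "cancels x y = cancels y x" unfolding cancels_def by auto

lemma reduced_Cons: "reduced (x # w) \<longleftrightarrow> reduced w \<and> (w = [] \<or> \<not> cancels x (hd w))"
  by (cases w) auto

lemma stp_reduced: "reduced r \<Longrightarrow> reduced (stp x r)"
  by (cases r) (auto simp: stp_def reduced_Cons)

lemma reduce_reduced: "reduced (reduce w)"
  by (induct w) (auto simp: reduce_Cons stp_reduced)

lemma stp_cons: "reduced (x # r) \<Longrightarrow> stp x r = x # r"
  by (cases r) (auto simp: stp_def)

lemma reduce_id: "reduced w \<Longrightarrow> reduce w = w"
  by (induct w) (auto simp: reduce_Cons reduced_Cons stp_cons)

lemma cancels_eq: "cancels x x' \<Longrightarrow> cancels x' y \<Longrightarrow> y = x"
  unfolding cancels_def by (cases x; cases y; cases x'; auto)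

lemma stp_stp: assumes "cancels x x'" "reduced r" shows "stp x (stp x' r) = r"
proof (cases r)
  case Nil then show ?thesis using assms by (simp add: stp_def)
next
  case (Cons y ys)
  show ?thesis
  proof (cases "cancels x' y")
    case True
    then have "y = x" using cancels_eq assms(1) by blast
    then have "reduced (x # ys)" using assms Cons by simp
    moreover have "stp x' r = ys" using True Cons by (simp add: stp_def)
    ultimately show ?thesis using Cons \<open>y = x\<close> by (simp add: stp_cons)
  next
    case False
    then show ?thesis using Cons assms by (simp add: stp_def cancels_sym)
  qed
qed

definition g :: "'a letter list \<Rightarrow> 'a letter list \<Rightarrow> 'a letter list" where
  "g u r = foldr stp u r"

lemma g_Cons[simp]: "g (x # u) r = stp x (g u r)" by (simp add: g_def)
lemma g_Nil[simp]: "g [] r = r" by (simp add: g_def)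

lemma g_reduced: "reduced r \<Longrightarrow> reduced (g u r)"
  by (induct u) (auto simp: stp_reduced)

lemma reduce_append: "reduce (u @ v) = g u (reduce v)"
  by (simp add: reduce_foldr g_def)

lemma g_stp: assumes "reduced w" "reduced r" shows "g (stp x w) r = stp x (g w r)"
proof (cases w)
  case Nil then show ?thesis by (simp add: stp_def)
next
  case (Cons y ys)
  show ?thesis
  proof (cases "cancels x y")
    case True
    have "reduced (g ys r)" using assms Cons by (simp add: g_reduced reduced_Cons)
    moreover have "stp x w = ys" using True Cons by (simp add: stp_def)
    ultimately show ?thesis using True Cons by (simp add: stp_stp)
  next
    case False then show ?thesis using Cons by (simp add: stp_def)
  qed
qed

lemma g_reduce: "reduced r \<Longrightarrow> g (reduce u) r = g u r"
  by (induct u) (simp_all add: reduce_Cons g_stp reduce_reduced)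

lemma reduce_left: "reduce (reduce u @ v) = reduce (u @ v)"
  by (simp add: reduce_append g_reduce reduce_reduced)

lemma reduce_right: "reduce (u @ reduce v) = reduce (u @ v)"
  by (simp add: reduce_append reduce_id reduce_reduced)

lemma reduce_mid: "reduce (a @ reduce b @ c) = reduce (a @ b @ c)"
  by (metis append_assoc reduce_left reduce_right)

definition finv :: "'a letter list \<Rightarrow> 'a letter list" where
  "finv w = rev (map (\<lambda>(b, y). (\<not> b, y)) w)"

lemma finv_Cons: "finv (x # w) = finv w @ [(\<not> fst x, snd x)]"
  by (cases x) (simp add: finv_def)

lemma finv_finv[simp]: "finv (finv w) = w"
  by (induct w) (auto simp: finv_def)

lemma reduce_inv: "reduce (w @ finv w) = []"
proof (induct w)
  case Nil then show ?case by (simp add: finv_def)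
next
  case (Cons x w)
  have "reduce ((x # w) @ finv (x # w)) = reduce ([x] @ w @ finv w @ [(\<not> fst x, snd x)])"
    by (simp add: finv_Cons)
  also have "\<dots> = reduce ([x] @ reduce (w @ finv w) @ [(\<not> fst x, snd x)])"
    by (metis append_assoc reduce_mid)
  also have "\<dots> = []" using Cons by (simp add: reduce_Cons stp_def cancels_def)
  finally show ?case .
qed

lemma set_stp: "set (stp x r) \<subseteq> insert x (set r)"
  by (cases r) (auto simp: stp_def)

lemma set_reduce: "set (reduce w) \<subseteq> set w"
  by (induct w) (use set_stp in \<open>fastforce simp: reduce_Cons\<close>)+

lemma reduced_snoc: "reduced (xs @ [z]) \<longleftrightarrow> reduced xs \<and> (xs = [] \<or> \<not> cancels (last xs) z)"
  by (induct xs) (auto simp: reduced_Cons)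

lemma finv_reduced: "reduced w \<Longrightarrow> reduced (finv w)"
proof (induct w)
  case Nil then show ?case by (simp add: finv_def)
next
  case (Cons x w)
  have r: "reduced (finv w)" using Cons by (simp add: reduced_Cons)
  show ?case
  proof (cases w)
    case Nil then show ?thesis by (simp add: finv_def)
  next
    case (Cons y ys)
    have l: "last (finv w) = (\<not> fst y, snd y)" using Cons by (simp add: finv_Cons)
    have "\<not> cancels x y" using Cons \<open>reduced (x # w)\<close> by simp
    then have "\<not> cancels (\<not> fst y, snd y) (\<not> fst x, snd x)" by (auto simp: cancels_def)
    then show ?thesis using r l by (simp add: finv_Cons reduced_snoc)
  qed
qed

lemma fg_carrier: "carrier (free_group Y) = {w. snd ` set w \<subseteq> Y \<and> reduced w}"
  by (simp add: free_group_def)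
lemma fg_mult: "x \<otimes>\<^bsub>free_group Y\<^esub> y = reduce (x @ y)"
  by (simp add: free_group_def)
lemma fg_one: "\<one>\<^bsub>free_group Y\<^esub> = []"
  by (simp add: free_group_def)

lemma fg_group: "group (free_group Y)"
proof (rule groupI)
  fix x y assume "x \<in> carrier (free_group Y)" "y \<in> carrier (free_group Y)"
  then show "x \<otimes>\<^bsub>free_group Y\<^esub> y \<in> carrier (free_group Y)"
    using set_reduce by (fastforce simp: fg_carrier fg_mult reduce_reduced)
next
  show "\<one>\<^bsub>free_group Y\<^esub> \<in> carrier (free_group Y)" by (simp add: fg_carrier fg_one)
next
  fix x y z
  show "x \<otimes>\<^bsub>free_group Y\<^esub> y \<otimes>\<^bsub>free_group Y\<^esub> z = x \<otimes>\<^bsub>free_group Y\<^esub> (y \<otimes>\<^bsub>free_group Y\<^esub> z)"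
    by (simp add: fg_mult reduce_left reduce_right)
next
  fix x assume "x \<in> carrier (free_group Y)"
  then show "\<one>\<^bsub>free_group Y\<^esub> \<otimes>\<^bsub>free_group Y\<^esub> x = x"
    by (simp add: fg_carrier fg_mult fg_one reduce_id)
next
  fix x assume x: "x \<in> carrier (free_group Y)"
  show "\<exists>y\<in>carrier (free_group Y). y \<otimes>\<^bsub>free_group Y\<^esub> x = \<one>\<^bsub>free_group Y\<^esub>"
  proof (intro bexI)
    show "finv x \<otimes>\<^bsub>free_group Y\<^esub> x = \<one>\<^bsub>free_group Y\<^esub>"
      using reduce_inv[of "finv x"] by (simp add: fg_mult fg_one)
    show "finv x \<in> carrier (free_group Y)" using x finv_reduced
      by (auto simp: fg_carrier finv_def)
  qed
qed

lemma fg_inv: assumes "w \<in> carrier (free_group Y)" shows "inv\<^bsub>free_group Y\<^esub> w = finv w"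
proof -
  interpret group "free_group Y" by (rule fg_group)
  have "finv w \<in> carrier (free_group Y)" using assms finv_reduced
    by (auto simp: fg_carrier finv_def)
  moreover have "finv w \<otimes>\<^bsub>free_group Y\<^esub> w = \<one>\<^bsub>free_group Y\<^esub>"
    using reduce_inv[of "finv w"] by (simp add: fg_mult fg_one)
  ultimately show ?thesis using assms inv_equality by blast
qed

definition phi0 :: "nat \<Rightarrow> nat \<times> nat \<Rightarrow> (nat \<times> nat) letter list" where
  "phi0 C y = (if fst y = 1 then A_word C (snd y) else [])"

definition phi :: "nat \<Rightarrow> (nat \<times> nat) letter \<Rightarrow> (nat \<times> nat) letter list" where
  "phi C x = (if fst x then finv (phi0 C (snd x)) else phi0 C (snd x))"

definition rho :: "nat \<Rightarrow> (nat \<times> nat) letter list \<Rightarrow> (nat \<times> nat) letter list" where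
  "rho C w = reduce (concat (map (phi C) w))"

lemma phi_cancel: "cancels x y \<Longrightarrow> reduce (phi C x @ phi C y) = []"
proof -
  assume "cancels x y"
  then have "y = (\<not> fst x, snd x)" by (cases x; cases y) (simp add: cancels_def)
  then have "phi C y = finv (phi C x)" by (simp add: phi_def)
  then show ?thesis using reduce_inv[of "phi C x"] by simp
qed

lemma rho_stp: "reduce (concat (map (phi C) (stp x r))) = reduce (concat (map (phi C) (x # r)))"
proof (cases r)
  case Nil then show ?thesis by (simp add: stp_def)
next
  case (Cons y ys)
  show ?thesis
  proof (cases "cancels x y")
    case True
    have "reduce (concat (map (phi C) (x # r))) = reduce ((phi C x @ phi C y) @ concat (map (phi C) ys))"
      using Cons by simp
    also have "\<dots> = reduce (reduce (phi C x @ phi C y) @ concat (map (phi C) ys))"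
      by (rule reduce_left[symmetric])
    also have "\<dots> = reduce (concat (map (phi C) ys))" using phi_cancel[OF True] by simp
    finally show ?thesis using True Cons by (simp add: stp_def)
  next
    case False then show ?thesis using Cons by (simp add: stp_def)
  qed
qed

lemma rho_reduce: "rho C (reduce w) = rho C w"
proof (induct w)
  case Nil then show ?case by simp
next
  case (Cons x w)
  have "rho C (reduce (x # w)) = reduce (concat (map (phi C) (x # reduce w)))"
    by (simp add: rho_def reduce_Cons rho_stp)
  also have "\<dots> = reduce (phi C x @ rho C (reduce w))"
    by (simp add: rho_def reduce_right)
  also have "\<dots> = reduce (phi C x @ rho C w)" using Cons by simp
  also have "\<dots> = rho C (x # w)" by (simp add: rho_def reduce_right)
  finally show ?case .
qed

lemma rho_mult: "rho C (reduce (u @ v)) = reduce (rho C u @ rho C v)"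
  by (simp only: rho_reduce) (simp add: rho_def reduce_left reduce_right)

lemma reduced_False: "reduced (map (\<lambda>j. (False, f j)) xs)"
proof (induct xs)
  case (Cons a xs) then show ?case by (cases xs) (auto simp: cancels_def)
qed simp

lemma A_reduced: "reduced (A_word C i)"
  unfolding A_word_def by (rule reduced_False)

lemma A_set: "1 \<le> i \<Longrightarrow> i \<le> m \<Longrightarrow> snd ` set (A_word C i) \<subseteq> Y_C m C"
  by (auto simp: A_word_def Y_C_def)

lemma finv_set: "snd ` set (finv w) = snd ` set w"
  by (force simp: finv_def)

lemma A_carrier: "i \<in> {1..m} \<Longrightarrow> A_word C i \<in> carrier (free_group (Y_C m C))"
  using A_set[of i m C] A_reduced by (simp add: fg_carrier)

lemma phi_reduced: "reduced (phi C x)"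
  by (simp add: phi_def phi0_def A_reduced finv_reduced)

lemma phi_set: "snd x \<in> Y_C m C \<Longrightarrow> snd ` set (phi C x) \<subseteq> Y_C m C"
proof -
  assume a: "snd x \<in> Y_C m C"
  have "snd ` set (phi0 C (snd x)) \<subseteq> Y_C m C"
  proof (cases "fst (snd x) = 1")
    case True
    then have "1 \<le> snd (snd x) \<and> snd (snd x) \<le> m" using a by (auto simp: Y_C_def)
    then show ?thesis using True A_set by (simp add: phi0_def)
  qed (simp add: phi0_def)
  then show ?thesis by (simp add: phi_def finv_set)
qed

lemma rho_carrier: "w \<in> carrier (free_group (Y_C m C)) \<Longrightarrow> rho C w \<in> carrier (free_group (Y_C m C))"
proof -
  assume w: "w \<in> carrier (free_group (Y_C m C))"
  have "snd ` set (concat (map (phi C) w)) \<subseteq> Y_C m C"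
  proof
    fix z assume "z \<in> snd ` set (concat (map (phi C) w))"
    then obtain x l where "x \<in> set w" "l \<in> set (phi C x)" "z = snd l" by auto
    moreover have "snd x \<in> Y_C m C" using w \<open>x \<in> set w\<close> by (auto simp: fg_carrier)
    ultimately show "z \<in> Y_C m C" using phi_set[of x m C] by auto
  qed
  moreover have "snd ` set (rho C w) \<subseteq> snd ` set (concat (map (phi C) w))"
    using set_reduce[of "concat (map (phi C) w)"] unfolding rho_def by (rule image_mono)
  ultimately show ?thesis using reduce_reduced
    unfolding fg_carrier rho_def by blast
qed

lemma rho_hom: "rho C \<in> hom (free_group (Y_C m C)) (free_group (Y_C m C))"
proof (rule homI)
  fix x assume "x \<in> carrier (free_group (Y_C m C))"
  then show "rho C x \<in> carrier (free_group (Y_C m C))" by (rule rho_carrier)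
next
  fix x y
  show "rho C (x \<otimes>\<^bsub>free_group (Y_C m C)\<^esub> y) = rho C x \<otimes>\<^bsub>free_group (Y_C m C)\<^esub> rho C y"
    unfolding fg_mult by (rule rho_mult)
qed

lemma rho_A: "1 \<le> C \<Longrightarrow> rho C (A_word C i) = A_word C i"
proof -
  assume C: "1 \<le> C"
  have u: "[1..<C+1] = 1 # [Suc 1..<C+1]" using C by (intro upt_conv_Cons) simp
  have aw: "A_word C i = (False, (1, i)) # map (\<lambda>j. (False, (j, i))) [Suc 1..<C+1]"
    unfolding A_word_def u by simp
  have p1: "phi C (False, (1, i)) = A_word C i" by (simp add: phi_def phi0_def)
  have p2: "concat (map (phi C) (map (\<lambda>j. (False, (j, i))) [Suc 1..<C+1])) = []"
    by (auto simp: phi_def phi0_def)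
  have "concat (map (phi C) (A_word C i)) = A_word C i"
    by (subst aw) (simp only: list.map concat.simps p1 p2 append_Nil2)
  then show ?thesis by (simp add: rho_def reduce_id A_reduced)
qed

theorem lemma3p1:
  fixes m C :: nat and N :: "(nat \<times> nat) letter list set"
  assumes "1 \<le> m" and "1 \<le> C"
    and "N \<lhd> (free_group (Y_C m C))\<lparr>carrier := F_sub m C\<rparr>"
  shows "normal_closure (free_group (Y_C m C)) N \<lhd> free_group (Y_C m C)
    \<and> normal_closure (free_group (Y_C m C)) N \<inter> F_sub m C = N"
proof -
  define G where "G = free_group (Y_C m C)"
  define F where "F = F_sub m C"
  define D where "D = D_set m C"
  interpret G: group G unfolding G_def by (rule fg_group)
  interpret r: group_hom G G "rho C"
    unfolding group_hom_def group_hom_axioms_def G_def using fg_group rho_hom by blast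
  have Dc: "D \<subseteq> carrier G" unfolding D_def D_set_def G_def using A_carrier by blast
  have F_gen: "F = generate G D" unfolding F_def F_sub_def G_def D_def by simp
  have subF: "subgroup F G" unfolding F_gen by (rule G.generate_is_subgroup[OF Dc])
  have Fc: "F \<subseteq> carrier G" using subF subgroup.subset by blast
  have fixF: "rho C h = h" if "h \<in> F" for h
    using that unfolding F_gen
  proof (induct h rule: generate.induct)
    case one then show ?case by (simp add: G_def fg_one rho_def)
  next
    case (incl h) then show ?case using rho_A[OF assms(2)] by (auto simp: D_def D_set_def)
  next
    case (inv h)
    then have "rho C h = h" using rho_A[OF assms(2)] by (auto simp: D_def D_set_def)
    moreover have "h \<in> carrier G" using inv Dc by auto
    ultimately show ?case by simp
  next
    case (eng h1 h2)
    then have "h1 \<in> carrier G" "h2 \<in> carrier G" using G.generate_in_carrier[OF Dc] by auto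
    then show ?case using eng by simp
  qed
  have phiF: "phi C x \<in> F" if "snd x \<in> Y_C m C" for x
  proof -
    obtain j i where ji: "snd x = (j, i)" by fastforce
    show ?thesis
    proof (cases "j = 1")
      case True
      then have i: "i \<in> {1..m}" using that ji by (auto simp: Y_C_def)
      then have AD: "A_word C i \<in> D" by (simp add: D_def D_set_def)
      show ?thesis
      proof (cases "fst x")
        case True
        have "inv\<^bsub>G\<^esub> (A_word C i) = finv (A_word C i)"
          unfolding G_def by (rule fg_inv[OF A_carrier[OF i]])
        then have "finv (A_word C i) \<in> F" unfolding F_gen using generate.inv[OF AD, of G] by simp
        then show ?thesis using True ji \<open>j = 1\<close> by (simp add: phi_def phi0_def)
      next
        case False
        then show ?thesis using AD ji \<open>j = 1\<close> unfolding F_gen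
          by (simp add: phi_def phi0_def generate.incl)
      qed
    next
      case False
      have "[] \<in> F" unfolding F_gen using generate.one[of G D] by (simp add: G_def fg_one)
      then show ?thesis using False ji by (simp add: phi_def phi0_def finv_def)
    qed
  qed
  have rhoF: "w \<in> carrier G \<Longrightarrow> rho C w \<in> F" for w
  proof (induct w)
    case Nil
    have "[] \<in> F" unfolding F_gen using generate.one[of G D] by (simp add: G_def fg_one)
    then show ?case by (simp add: rho_def)
  next
    case (Cons x w)
    have xw: "snd ` set (x # w) \<subseteq> Y_C m C" "reduced (x # w)"
      using Cons.prems unfolding G_def fg_carrier by auto
    have wc: "w \<in> carrier G" using xw unfolding G_def fg_carrier reduced_Cons by auto
    have xc: "[x] \<in> carrier G" using xw unfolding G_def fg_carrier by auto
    have "reduce (x # w) = x # w" using xw(2) by (rule reduce_id)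
    then have eq: "x # w = [x] \<otimes>\<^bsub>G\<^esub> w" unfolding G_def fg_mult by simp
    have "rho C [x] = phi C x" by (simp add: rho_def reduce_id phi_reduced)
    moreover have "snd x \<in> Y_C m C" using xw by auto
    ultimately have "rho C [x] \<in> F" using phiF by simp
    moreover have "rho C w \<in> F" using Cons.hyps wc by simp
    ultimately have "rho C [x] \<otimes>\<^bsub>G\<^esub> rho C w \<in> F" by (rule subgroup.m_closed[OF subF])
    moreover have "rho C (x # w) = rho C [x] \<otimes>\<^bsub>G\<^esub> rho C w"
      unfolding eq by (rule r.hom_mult[OF xc wc])
    ultimately show ?case by simp
  qed
  have nN: "N \<lhd> G\<lparr>carrier := F\<rparr>" using assms(3) by (simp add: G_def F_def)
  interpret G': group "G\<lparr>carrier := F\<rparr>" using G.subgroup_imp_group[OF subF] .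
  have subN': "subgroup N (G\<lparr>carrier := F\<rparr>)" using nN normal_imp_subgroup by blast
  have NF: "N \<subseteq> F" using subgroup.subset[OF subN'] by simp
  have Ninv: "inv\<^bsub>G\<^esub> a \<in> N" if "a \<in> N" for a
  proof -
    have "inv\<^bsub>G\<lparr>carrier := F\<rparr>\<^esub> a \<in> N" using subgroup.m_inv_closed[OF subN' that] .
    moreover have "a \<in> F" using that NF by blast
    ultimately show ?thesis using G.m_inv_consistent[OF subF, of a] by simp
  qed
  have Nmult: "a \<otimes>\<^bsub>G\<^esub> b \<in> N" if "a \<in> N" "b \<in> N" for a b
    using subgroup.m_closed[OF subN' that] by simp
  have None: "\<one>\<^bsub>G\<^esub> \<in> N" using subgroup.one_closed[OF subN'] by simp
  have Nconj: "x \<otimes>\<^bsub>G\<^esub> h \<otimes>\<^bsub>G\<^esub> inv\<^bsub>G\<^esub> x \<in> N" if "x \<in> F" "h \<in> N" for x h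
  proof -
    have "x \<otimes>\<^bsub>G\<lparr>carrier := F\<rparr>\<^esub> h \<otimes>\<^bsub>G\<lparr>carrier := F\<rparr>\<^esub> inv\<^bsub>G\<lparr>carrier := F\<rparr>\<^esub> x \<in> N"
      using normal.inv_op_closed2[OF nN] that by simp
    then show ?thesis using G.m_inv_consistent[OF subF, of x] that(1) by simp
  qed
  define S where "S = (\<Union>g\<in>carrier G. (\<lambda>s. g \<otimes>\<^bsub>G\<^esub> s \<otimes>\<^bsub>G\<^esub> inv\<^bsub>G\<^esub> g) ` N)"
  have L_def: "normal_closure G N = generate G S" unfolding normal_closure_def S_def by simp
  have Sc: "S \<subseteq> carrier G" unfolding S_def using NF Fc by (auto intro!: G.m_closed)
  have NS: "N \<subseteq> S"
  proof
    fix s assume "s \<in> N"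
    then have "s \<in> carrier G" using NF Fc by blast
    then have "s = \<one>\<^bsub>G\<^esub> \<otimes>\<^bsub>G\<^esub> s \<otimes>\<^bsub>G\<^esub> inv\<^bsub>G\<^esub> \<one>\<^bsub>G\<^esub>" by simp
    then show "s \<in> S" unfolding S_def using \<open>s \<in> N\<close> by blast
  qed
  have normL: "normal_closure G N \<lhd> G"
    unfolding L_def
  proof (rule G.normal_generateI[OF Sc])
    fix h g assume h: "h \<in> S" and g: "g \<in> carrier G"
    then obtain g' s where g': "g' \<in> carrier G" and s: "s \<in> N"
      and hd: "h = g' \<otimes>\<^bsub>G\<^esub> s \<otimes>\<^bsub>G\<^esub> inv\<^bsub>G\<^esub> g'" unfolding S_def by blast
    have sc: "s \<in> carrier G" using s NF Fc by blast
    have "g \<otimes>\<^bsub>G\<^esub> h \<otimes>\<^bsub>G\<^esub> inv\<^bsub>G\<^esub> g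
        = (g \<otimes>\<^bsub>G\<^esub> g') \<otimes>\<^bsub>G\<^esub> s \<otimes>\<^bsub>G\<^esub> inv\<^bsub>G\<^esub> (g \<otimes>\<^bsub>G\<^esub> g')"
      using g g' sc by (simp add: hd G.m_assoc G.inv_mult_group)
    moreover have "g \<otimes>\<^bsub>G\<^esub> g' \<in> carrier G" using g g' by simp
    ultimately show "g \<otimes>\<^bsub>G\<^esub> h \<otimes>\<^bsub>G\<^esub> inv\<^bsub>G\<^esub> g \<in> S" unfolding S_def using s by blast
  qed
  define H where "H = {x \<in> carrier G. rho C x \<in> N}"
  have subH: "subgroup H G"
  proof (rule G.subgroupI)
    show "H \<subseteq> carrier G" unfolding H_def by blast
    have "rho C \<one>\<^bsub>G\<^esub> = \<one>\<^bsub>G\<^esub>" by simp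
    then show "H \<noteq> {}" unfolding H_def using None by force
  next
    fix a assume "a \<in> H" then show "inv\<^bsub>G\<^esub> a \<in> H" unfolding H_def using Ninv by auto
  next
    fix a b assume "a \<in> H" "b \<in> H" then show "a \<otimes>\<^bsub>G\<^esub> b \<in> H" unfolding H_def using Nmult by auto
  qed
  have SH: "S \<subseteq> H"
  proof
    fix h assume "h \<in> S"
    then obtain g s where g: "g \<in> carrier G" and s: "s \<in> N"
      and hd: "h = g \<otimes>\<^bsub>G\<^esub> s \<otimes>\<^bsub>G\<^esub> inv\<^bsub>G\<^esub> g" unfolding S_def by blast
    have sc: "s \<in> carrier G" using s NF Fc by blast
    have "rho C h = rho C g \<otimes>\<^bsub>G\<^esub> rho C s \<otimes>\<^bsub>G\<^esub> inv\<^bsub>G\<^esub> (rho C g)"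
      using g sc by (simp add: hd)
    also have "\<dots> = rho C g \<otimes>\<^bsub>G\<^esub> s \<otimes>\<^bsub>G\<^esub> inv\<^bsub>G\<^esub> (rho C g)" using fixF s NF by auto
    finally have "rho C h \<in> N" using Nconj[OF rhoF[OF g] s] by simp
    then show "h \<in> H" unfolding H_def using \<open>h \<in> S\<close> Sc by auto
  qed
  have LH: "normal_closure G N \<subseteq> H" unfolding L_def by (rule G.generate_subgroup_incl[OF SH subH])
  have "normal_closure G N \<inter> F = N"
  proof
    show "normal_closure G N \<inter> F \<subseteq> N"
    proof
      fix x assume "x \<in> normal_closure G N \<inter> F"
      then have "rho C x \<in> N" "rho C x = x" using LH fixF unfolding H_def by auto
      then show "x \<in> N" by simp
    qed
    show "N \<subseteq> normal_closure G N \<inter> F"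
      using NS NF unfolding L_def by (auto intro: generate.incl)
  qed
  then show ?thesis using normL unfolding G_def F_def by simp
qed

end
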